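(* Let $x,x'$ be two adjacent vertices of a graph $G$ and let $y,y'$ be two adjacent vertices of a graph $H$, where $G$ and $H$ are connected. If $X$ is a $\mu_t(G\,\Box\,H)$-set and $(x,y)\in X$, then $(x',y')\notin X$.
   Context: All graphs are finite, simple and undirected. The Cartesian product $G\,\Box\,H$ has vertex set $V(G)\times V(H)$, with $(x,y)$ adjacent to $(x',y')$ iff either $x=x'$ and $yy'\in E(H)$, or $xx'\in E(G)$ and $y=y'$. Let $F$ be a connected graph and $X\subseteq V(F)$. Two vertices $u,v\in V(F)$ are $X$-visible if there exists a shortest $u,v$-path in $F$ none of whose internal vertices belongs to $X$. $X$ is a total mutual-visibility set of $F$ if every two vertices of $F$ are $X$-visible (the empty set is allowed). $\mu_t(F)$ is the maximum cardinality of a total mutual-visibility set of $F$, and a $\mu_t(F)$-set is a total mutual-visibility set of that cardinality. *)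

theory Defs
  imports Main
begin

definition graph :: "'a set \<Rightarrow> ('a \<Rightarrow> 'a \<Rightarrow> bool) \<Rightarrow> bool" where
  "graph V E \<longleftrightarrow> finite V \<and> (\<forall>u v. E u v \<longrightarrow> u \<in> V \<and> v \<in> V)
     \<and> (\<forall>u v. E u v \<longrightarrow> E v u) \<and> (\<forall>u. \<not> E u u)"

definition walk :: "'a set \<Rightarrow> ('a \<Rightarrow> 'a \<Rightarrow> bool) \<Rightarrow> 'a list \<Rightarrow> bool" where
  "walk V E p \<longleftrightarrow> p \<noteq> [] \<and> set p \<subseteq> V \<and> (\<forall>i. Suc i < length p \<longrightarrow> E (p ! i) (p ! Suc i))"

definition walk_between :: "'a set \<Rightarrow> ('a \<Rightarrow> 'a \<Rightarrow> bool) \<Rightarrow> 'a \<Rightarrow> 'a \<Rightarrow> 'a list \<Rightarrow> bool" where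
  "walk_between V E u v p \<longleftrightarrow> walk V E p \<and> hd p = u \<and> last p = v"

definition connected_graph :: "'a set \<Rightarrow> ('a \<Rightarrow> 'a \<Rightarrow> bool) \<Rightarrow> bool" where
  "connected_graph V E \<longleftrightarrow> V \<noteq> {} \<and> (\<forall>u\<in>V. \<forall>v\<in>V. \<exists>p. walk_between V E u v p)"

text \<open>A shortest u,v-path: a u,v-walk of minimum length (such walks are automatically paths).\<close>
definition shortest_path :: "'a set \<Rightarrow> ('a \<Rightarrow> 'a \<Rightarrow> bool) \<Rightarrow> 'a \<Rightarrow> 'a \<Rightarrow> 'a list \<Rightarrow> bool" where
  "shortest_path V E u v p \<longleftrightarrow> walk_between V E u v p
     \<and> (\<forall>q. walk_between V E u v q \<longrightarrow> length p \<le> length q)"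

definition internal :: "'a list \<Rightarrow> 'a set" where
  "internal p = set (butlast (tl p))"

definition X_visible :: "'a set \<Rightarrow> ('a \<Rightarrow> 'a \<Rightarrow> bool) \<Rightarrow> 'a set \<Rightarrow> 'a \<Rightarrow> 'a \<Rightarrow> bool" where
  "X_visible V E X u v \<longleftrightarrow> (\<exists>p. shortest_path V E u v p \<and> internal p \<inter> X = {})"

definition total_mv_set :: "'a set \<Rightarrow> ('a \<Rightarrow> 'a \<Rightarrow> bool) \<Rightarrow> 'a set \<Rightarrow> bool" where
  "total_mv_set V E X \<longleftrightarrow> X \<subseteq> V \<and> (\<forall>u\<in>V. \<forall>v\<in>V. X_visible V E X u v)"

definition mu_t :: "'a set \<Rightarrow> ('a \<Rightarrow> 'a \<Rightarrow> bool) \<Rightarrow> nat" where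
  "mu_t V E = Max (card ` {X. total_mv_set V E X})"

definition mu_t_set :: "'a set \<Rightarrow> ('a \<Rightarrow> 'a \<Rightarrow> bool) \<Rightarrow> 'a set \<Rightarrow> bool" where
  "mu_t_set V E X \<longleftrightarrow> total_mv_set V E X \<and> card X = mu_t V E"

definition cart_vertices :: "'a set \<Rightarrow> 'b set \<Rightarrow> ('a \<times> 'b) set" where
  "cart_vertices VG VH = VG \<times> VH"

definition cart_edges :: "('a \<Rightarrow> 'a \<Rightarrow> bool) \<Rightarrow> ('b \<Rightarrow> 'b \<Rightarrow> bool) \<Rightarrow> ('a \<times> 'b) \<Rightarrow> ('a \<times> 'b) \<Rightarrow> bool" where
  "cart_edges EG EH = (\<lambda>(x, y) (x', y'). (x = x' \<and> EH y y') \<or> (EG x x' \<and> y = y'))"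

end

theory Submission
  imports Defs
begin

theorem lemma5p8:
  fixes VG :: "'a set" and EG :: "'a \<Rightarrow> 'a \<Rightarrow> bool"
    and VH :: "'b set" and EH :: "'b \<Rightarrow> 'b \<Rightarrow> bool"
  assumes "graph VG EG" and "connected_graph VG EG"
    and "graph VH EH" and "connected_graph VH EH"
    and "EG x x'" and "EH y y'"
    and "mu_t_set (cart_vertices VG VH) (cart_edges EG EH) X"
    and "(x, y) \<in> X"
  shows "(x', y') \<notin> X"
proof
  assume xy': "(x', y') \<in> X"
  let ?V = "cart_vertices VG VH" and ?E = "cart_edges EG EH"
  have gx: "x \<in> VG" "x' \<in> VG" "x \<noteq> x'" using assms(1,5) unfolding graph_def by metis+
  have gy: "y \<in> VH" "y' \<in> VH" "y \<noteq> y'" using assms(3,6) unfolding graph_def by metis+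
  have tm: "total_mv_set ?V ?E X" using assms(7) unfolding mu_t_set_def by blast
  have uV: "(x, y') \<in> ?V" "(x', y) \<in> ?V" using gx gy by (auto simp: cart_vertices_def)
  then obtain p where sp: "shortest_path ?V ?E (x, y') (x', y) p" and int: "internal p \<inter> X = {}"
    using tm unfolding total_mv_set_def X_visible_def by blast
  have q: "walk_between ?V ?E (x, y') (x', y) [(x, y'), (x, y), (x', y)]"
    unfolding walk_between_def walk_def using gx gy assms(1,3,5,6)
    apply (auto simp: cart_vertices_def cart_edges_def graph_def nth_Cons split: nat.splits)
    done
  have len: "length p \<le> 3" using sp q unfolding shortest_path_def by force
  have wp: "walk ?V ?E p" "hd p = (x, y')" "last p = (x', y)"
    using sp unfolding shortest_path_def walk_between_def by auto
  show False
  proof (cases p)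
    case Nil then show ?thesis using wp unfolding walk_def by simp
  next
    case (Cons a r)
    note pa = this
    show ?thesis
    proof (cases r)
      case Nil then show ?thesis using wp pa gx by simp
    next
      case (Cons b s)
      note r = this
      show ?thesis
      proof (cases s)
        case Nil
        have "?E a b" using wp(1) unfolding walk_def using pa r Nil by fastforce
        then show ?thesis using wp pa r Nil gx gy by (simp add: cart_edges_def)
      next
        case (Cons c t)
        have t: "t = []" using len Cons r \<open>p = a # r\<close> by simp
        have e1: "?E a b" "?E b c" using wp(1) unfolding walk_def
          using Cons r \<open>p = a # r\<close> by (fastforce, force)
        have ac: "a = (x, y')" "c = (x', y)" using wp Cons r \<open>p = a # r\<close> t by auto
        have "b \<in> internal p" using Cons r \<open>p = a # r\<close> t by (simp add: internal_def)
        hence bX: "b \<notin> X" using int by blast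
        obtain b1 b2 where b: "b = (b1, b2)" by fastforce
        have "b = (x, y) \<or> b = (x', y')" using e1 ac gx gy assms(1,3) b
          by (auto simp: cart_edges_def graph_def)
        then show ?thesis using bX assms(8) xy' by blast
      qed
    qed
  qed
qed

end
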